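(* Let $f:\mathbb N\to\mathbb R_{\ge0}$ be a multiplicative function with $(1\star f)(n)\le n$ for all $n\ge1$. Then for any $M\in\mathbb N$, real $t\geq 1$, $K\in\mathbb R$ and $C>0$, $$\sum_{\substack{mn=M \\ \lvert\{ p\leq t \text{ prime}: p\mid m \}\rvert \geq K}} f(n) \ll_C M e^{-CK}(\operatorname{Log} t)^{e^{C}-1},$$ where the sum is over pairs of positive integers $(m,n)$ with $mn=M$, and the implied constant depends only on $C$.
   Context: $(1\star f)(n)=\sum_{d\mid n}f(d)$. $\operatorname{Log} t=\max\{1,\log t\}$. *)

theory Defs
  imports Complex_Main "HOL-Computational_Algebra.Primes"
begin

definition multiplicative :: "(nat \<Rightarrow> real) \<Rightarrow> bool" where
  "multiplicative f \<longleftrightarrow> f 1 = 1 \<and>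
     (\<forall>m n. m > 0 \<longrightarrow> n > 0 \<longrightarrow> coprime m n \<longrightarrow> f (m * n) = f m * f n)"

definition one_conv :: "(nat \<Rightarrow> real) \<Rightarrow> nat \<Rightarrow> real" where
  "one_conv f n = (\<Sum>d\<in>{d. d dvd n}. f d)"

definition Log :: "real \<Rightarrow> real" where
  "Log t = max 1 (ln t)"

end

theory Submission
  imports Defs
begin

lemma prod_prime_powers_dvd:
  fixes S :: "nat set" and x :: nat
  assumes "finite S" "\<forall>p\<in>S. prime p" "\<forall>p\<in>S. p ^ e p dvd x"
  shows "(\<Prod>p\<in>S. p ^ e p) dvd x"
  using assms
proof (induction S rule: finite_induct)
  case empty thus ?case by simp
next
  case (insert p S)
  have "coprime (p ^ e p) (\<Prod>q\<in>S. q ^ e q)"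
  proof (rule prod_coprime_right)
    fix q assume "q \<in> S"
    then have "coprime p q" using insert by (metis insert_iff primes_coprime)
    then show "coprime (p ^ e p) (q ^ e q)" by simp
  qed
  with insert show ?case by (simp add: divides_mult)
qed

lemma prod_primes_dvd:
  fixes S :: "nat set" and x :: nat
  assumes "finite S" "\<forall>p\<in>S. prime p" "\<forall>p\<in>S. p dvd x"
  shows "\<Prod>S dvd x"
  using prod_prime_powers_dvd[OF assms(1,2), of "\<lambda>_. 1" x] assms(3) by simp

lemma primorial_le: "(\<Prod>{p::nat. prime p \<and> p \<le> n}) \<le> 4 ^ n"
proof (induction n rule: less_induct)
  case (less n)
  show ?case
  proof (cases "n \<le> 2")
    case True
    then consider "n \<le> 1" | "n = 2" by linarith
    then show ?thesis
    proof cases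
      case 1
      then have e: "{p::nat. prime p \<and> p \<le> n} = {}" by (auto dest: prime_ge_2_nat)
      show ?thesis unfolding e by simp
    next
      case 2
      then have "{p::nat. prime p \<and> p \<le> n} = {2}" by (auto simp: le_Suc_eq dest: prime_ge_2_nat)
      then show ?thesis using 2 by simp
    qed
  next
    case False
    show ?thesis
    proof (cases "even n")
      case True
      then have np: "\<not> prime n" using False
        using prime_odd_nat[of n] by auto
      have "{p::nat. prime p \<and> p \<le> n} = {p. prime p \<and> p \<le> n - 1}"
      proof (intro Collect_cong iffI conjI)
        fix p assume "prime p \<and> p \<le> n"
        then have "p \<noteq> n" using np by auto
        then show "p \<le> n - 1" using \<open>prime p \<and> p \<le> n\<close> by linarith
      qed auto
      then have "(\<Prod>{p::nat. prime p \<and> p \<le> n}) \<le> 4 ^ (n - 1)" using less[of "n-1"] False by simp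
      also have "\<dots> \<le> 4 ^ n" by (rule power_increasing) auto
      finally show ?thesis .
    next
      case odd: False
      then obtain m where n: "n = 2*m+1" by (metis oddE)
      with False have m1: "m \<ge> 1" by auto
      define A where "A = {p::nat. prime p \<and> p \<le> m+1}"
      define B where "B = {p::nat. prime p \<and> m+1 < p \<and> p \<le> 2*m+1}"
      have fA: "finite A" "finite B" unfolding A_def B_def by auto
      have un: "{p::nat. prime p \<and> p \<le> n} = A \<union> B" "A \<inter> B = {}"
        unfolding A_def B_def n by auto
      have pA: "\<Prod>A \<le> 4 ^ (m+1)" unfolding A_def using less[of "m+1"] n m1 by simp
      have "\<Prod>B dvd (2*m+1) choose m"
      proof (rule prod_primes_dvd[OF fA(2)])
        show "\<forall>p\<in>B. prime p" unfolding B_def by auto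
        show "\<forall>p\<in>B. p dvd (2*m+1) choose m"
        proof
          fix p assume "p \<in> B"
          then have p: "prime p" "m+1 < p" "p \<le> 2*m+1" unfolding B_def by auto
          have "p dvd fact (2*m+1)" using prime_dvd_fact_iff[OF p(1)] p(3) by blast
          also have "fact (2*m+1) = fact m * fact (m+1) * ((2*m+1) choose m)"
            using binomial_fact_lemma[of m "2*m+1"] by (simp add: ac_simps)
          finally have d: "p dvd fact m * fact (m+1) * ((2*m+1) choose m)" .
          have "\<not> p dvd fact m" "\<not> p dvd fact (m+1)" using p prime_dvd_fact_iff[OF p(1)] by (auto simp del: fact_Suc)
          with d p(1) show "p dvd (2*m+1) choose m" by (auto simp: prime_dvd_mult_iff)
        qed
      qed
      then have "\<Prod>B \<le> (2*m+1) choose m" by (rule dvd_imp_le) simp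
      also have "\<dots> \<le> 4 ^ m"
      proof -
        have "((2*m+1) choose m) + ((2*m+1) choose (m+1)) = (\<Sum>k\<in>{m, m+1}. (2*m+1) choose k)" by simp
        also have "\<dots> \<le> (\<Sum>k\<le>2*m+1. (2*m+1) choose k)" by (rule sum_mono2) auto
        also have "\<dots> = 2 ^ (2*m+1)" by (rule choose_row_sum)
        finally have "2 * ((2*m+1) choose m) \<le> 2 ^ (2*m+1)"
          using binomial_symmetric[of m "2*m+1"] by simp
        moreover have "(2::nat) ^ (2*m+1) = 2 * 4^m" by (induction m) auto
        ultimately show ?thesis by simp
      qed
      finally have pB: "\<Prod>B \<le> 4 ^ m" .
      have "\<Prod>{p::nat. prime p \<and> p \<le> n} = \<Prod>A * \<Prod>B" using un fA by (simp add: prod.union_disjoint)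
      also have "\<dots> \<le> 4^(m+1) * 4^m" using pA pB by (rule mult_le_mono)
      also have "\<dots> = 4 ^ n" unfolding n by (metis add.commute add_Suc_right mult_2 plus_1_eq_Suc power_add)
      finally show ?thesis .
    qed
  qed
qed

lemma pow_dvd_fact: "0 < p \<Longrightarrow> p ^ k * fact k dvd (fact (k*p) :: nat)"
proof -
  assume p: "0 < p"
  have "(\<lambda>j. j*p) ` {1..k} \<subseteq> {1..k*p}" using p by auto
  then have "\<Prod>((\<lambda>j. j*p) ` {1..k}) dvd \<Prod>{1..k*p}" by (rule prod_dvd_prod_subset[rotated]) simp
  moreover have "\<Prod>((\<lambda>j. j*p) ` {1..k}) = (\<Prod>j\<in>{1..k}. j*p)"
  proof (rule prod.reindex_cong[where l="\<lambda>j. j*p"])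
    show "inj_on (\<lambda>j. j*p) {1..k}" using p by (simp add: inj_on_def)
  qed auto
  moreover have "(\<Prod>j\<in>{1..k}. j*p) = p ^ k * fact k" by (simp add: prod.distrib fact_prod)
  ultimately show ?thesis by (simp add: fact_prod)
qed

lemma theta_le: "(\<Sum>p\<in>{p. prime p \<and> p \<le> n}. ln (real p)) \<le> real n * ln 4"
proof -
  have "(\<Sum>p\<in>{p. prime p \<and> p \<le> n}. ln (real p)) = ln (\<Prod>p\<in>{p. prime p \<and> p \<le> n}. real p)"
    by (subst ln_prod) (auto dest: prime_gt_0_nat)
  also have "(\<Prod>p\<in>{p. prime p \<and> p \<le> n}. real p) = real (\<Prod>{p. prime p \<and> p \<le> n})" by simp
  also have "ln \<dots> \<le> ln (real (4 ^ n))"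
  proof (subst ln_le_cancel_iff)
    show "real (\<Prod>{p. prime p \<and> p \<le> n}) \<le> real (4 ^ n)" using primorial_le[of n] by (simp only: of_nat_le_iff)
    show "0 < real (\<Prod>{p. prime p \<and> p \<le> n})" by (simp only: of_nat_0_less_iff) (auto intro!: prod_pos dest: prime_gt_0_nat)
  qed simp
  also have "\<dots> = real n * ln 4" by (simp add: ln_realpow)
  finally show ?thesis .
qed

lemma mertens1_nat:
  assumes n: "n \<ge> 1"
  shows "(\<Sum>p\<in>{p. prime p \<and> p \<le> n}. ln (real p) / real p) \<le> ln (real n) + ln 4"
proof -
  define P where "P = {p. prime p \<and> p \<le> n}"
  have fP: "finite P" unfolding P_def by auto
  have "(\<Prod>p\<in>P. p ^ (n div p)) dvd fact n"
  proof (rule prod_prime_powers_dvd[OF fP])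
    show "\<forall>p\<in>P. prime p" unfolding P_def by auto
    show "\<forall>p\<in>P. p ^ (n div p) dvd fact n"
    proof
      fix p assume "p \<in> P"
      then have p: "0 < p" unfolding P_def by (auto dest: prime_gt_0_nat)
      have "p ^ (n div p) dvd fact ((n div p) * p)" using pow_dvd_fact[OF p, of "n div p"]
        using dvd_mult_left by blast
      also have "\<dots> dvd fact n" by (rule fact_dvd) simp
      finally show "p ^ (n div p) dvd fact n" .
    qed
  qed
  then have "(\<Prod>p\<in>P. p ^ (n div p)) \<le> fact n" by (rule dvd_imp_le) simp
  also have "\<dots> \<le> n ^ n" using fact_le_power[of n, where 'a=nat] by (simp only: of_nat_id)
  finally have le: "real (\<Prod>p\<in>P. p ^ (n div p)) \<le> real n ^ n" by (metis of_nat_le_iff of_nat_power)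
  have pos: "0 < real (\<Prod>p\<in>P. p ^ (n div p))" using fP unfolding P_def
    by (auto intro!: prod_pos dest: prime_gt_0_nat)
  have "ln (real (\<Prod>p\<in>P. p ^ (n div p))) = (\<Sum>p\<in>P. real (n div p) * ln (real p))"
    unfolding of_nat_prod using fP
    by (subst ln_prod) (auto simp: P_def ln_realpow dest: prime_gt_0_nat)
  moreover have "ln (real (\<Prod>p\<in>P. p ^ (n div p))) \<le> ln (real n ^ n)"
    using le pos n by (subst ln_le_cancel_iff) auto
  moreover have "ln (real n ^ n) = real n * ln (real n)" using n by (simp add: ln_realpow)
  ultimately have A: "(\<Sum>p\<in>P. real (n div p) * ln (real p)) \<le> real n * ln (real n)" by simp
  have "(\<Sum>p\<in>P. (real n / real p - 1) * ln (real p)) \<le> (\<Sum>p\<in>P. real (n div p) * ln (real p))"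
  proof (rule sum_mono)
    fix p assume "p \<in> P"
    then have p: "p > 0" unfolding P_def by (auto dest: prime_gt_0_nat)
    have "real n = real p * real (n div p) + real (n mod p)"
      by (metis div_mult_mod_eq of_nat_add of_nat_mult mult.commute)
    moreover have "real (n mod p) < real p" using p by simp
    ultimately have "real n / real p - 1 \<le> real (n div p)" using p by (simp add: field_simps)
    moreover have "ln (real p) \<ge> 0" using p by simp
    ultimately show "(real n / real p - 1) * ln (real p) \<le> real (n div p) * ln (real p)"
      by (rule mult_right_mono)
  qed
  also note A
  finally have B: "(\<Sum>p\<in>P. (real n / real p - 1) * ln (real p)) \<le> real n * ln (real n)" .
  have "(\<Sum>p\<in>P. (real n / real p - 1) * ln (real p)) =
        real n * (\<Sum>p\<in>P. ln (real p) / real p) - (\<Sum>p\<in>P. ln (real p))"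
    by (simp add: sum_distrib_left sum_subtractf algebra_simps)
  with B theta_le[of n] have "real n * (\<Sum>p\<in>P. ln (real p) / real p) \<le> real n * (ln (real n) + ln 4)"
    unfolding P_def by (simp add: algebra_simps)
  then show ?thesis unfolding P_def using n by simp
qed

lemma mertens1:
  assumes x: "x \<ge> 1"
  shows "(\<Sum>p\<in>{p. prime p \<and> real p \<le> x}. ln (real p) / real p) \<le> ln x + ln 4"
proof -
  define n where "n = nat \<lfloor>x\<rfloor>"
  have n1: "n \<ge> 1" unfolding n_def using x by linarith
  have eq: "{p. prime p \<and> real p \<le> x} = {p. prime p \<and> p \<le> n}"
  proof -
    have "\<lfloor>x\<rfloor> \<ge> 0" using x by simp
    then show ?thesis unfolding n_def by (auto simp: le_nat_iff le_floor_iff)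
  qed
  have "real n \<le> x" unfolding n_def using x by linarith
  then have "ln (real n) \<le> ln x" using n1 by simp
  then show ?thesis unfolding eq using mertens1_nat[OF n1] by linarith
qed

lemma recip_split: "(x::real) > 0 \<Longrightarrow> 1 / x = 1 / (x + 1) + 1 / (x * (x + 1))"
  by (simp add: divide_simps)

lemma tele:
  assumes "1 \<le> m" "m \<le> J"
  shows "1 / real m = 1 / real J + (\<Sum>j\<in>{m..<J}. 1 / (real j * (real j + 1)))"
  using assms(2)
proof (induction J rule: dec_induct)
  case base then show ?case by simp
next
  case (step J)
  have "real J > 0" using step assms by simp
  then have "1 / real J = 1 / real (Suc J) + 1 / (real J * (real J + 1))"
    using recip_split[of "real J"] by simp
  then show ?case using step by simp
qed

lemma harm_le: "n \<ge> 1 \<Longrightarrow> (\<Sum>j\<in>{1..n}. 1 / real j) \<le> 1 + ln (real n)"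
proof (induction n rule: dec_induct)
  case base then show ?case by simp
next
  case (step n)
  have n: "real n > 0" using step by simp
  have "ln (real n / (real n + 1)) \<le> real n / (real n + 1) - 1"
    using n by (intro ln_le_minus_one) simp
  also have "\<dots> = - 1 / (real n + 1)" using n by (simp add: field_simps)
  finally have "1 / (real n + 1) \<le> ln (real n + 1) - ln (real n)"
    using n by (simp add: ln_div)
  moreover have "(\<Sum>j\<in>{1..Suc n}. 1 / real j) = (\<Sum>j\<in>{1..n}. 1 / real j) + 1 / (real n + 1)"
    by (simp add: add.commute)
  moreover have "real (Suc n) = real n + 1" by simp
  ultimately show ?case using step.IH by (simp only:)
qed

lemma mertens2:
  assumes t: "t \<ge> 1"
  shows "(\<Sum>p\<in>{p. prime p \<and> real p \<le> t}. 1 / real p) \<le> ln (Log t) + 10"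
proof -
  define Pt where "Pt = {p. prime p \<and> real p \<le> t}"
  define Q where "Q = {p\<in>Pt. 3 \<le> p}"
  define R where "R = {p\<in>Pt. p < 3}"
  have fPt: "finite Pt" unfolding Pt_def
    by (rule finite_subset[of _ "{..nat \<lfloor>t\<rfloor>}"]) (auto simp: le_nat_iff le_floor_iff)
  have fQ: "finite Q" "finite R" using fPt unfolding Q_def R_def by auto
  have split: "Pt = R \<union> Q" "R \<inter> Q = {}" unfolding Q_def R_def by auto
  have R2: "R \<subseteq> {2}"
  proof
    fix p assume "p \<in> R"
    then have "prime p" "p < 3" unfolding R_def Pt_def by auto
    then have "p \<ge> 2" "p < 3" using prime_ge_2_nat by auto
    then show "p \<in> {2}" by simp
  qed
  have "(\<Sum>p\<in>R. 1 / real p) \<le> (\<Sum>p\<in>{2::nat}. 1 / real p)"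
    by (rule sum_mono2[OF _ R2]) auto
  then have sR: "(\<Sum>p\<in>R. 1 / real p) \<le> 1/2" by simp
  have L0: "ln (Log t) \<ge> 0" unfolding Log_def by simp
  have ln4: "ln (4::real) \<le> 3" using ln_le_minus_one[of 4] by simp
  have sQ: "(\<Sum>p\<in>Q. 1 / real p) \<le> ln (Log t) + 9"
  proof (cases "Q = {}")
    case True then show ?thesis using L0 by simp
  next
    case False
    define J where "J = nat \<lfloor>ln t\<rfloor>"
    define m where "m p = nat \<lfloor>ln (real p)\<rfloor>" for p :: nat
    define w where "w p = ln (real p) / real p" for p :: nat
    define g where "g j = 1 / (real j * (real j + 1))" for j :: nat
    have Qprop: "3 \<le> p" "real p \<le> t" "prime p" if "p \<in> Q" for p
      using that unfolding Q_def Pt_def by auto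
    have lnp: "ln (real p) \<ge> 1" if "p \<in> Q" for p
    proof -
      have "exp 1 \<le> real p" using exp_le Qprop(1)[OF that] by linarith
      moreover have "real p > 0" using Qprop(1)[OF that] by simp
      ultimately have "ln (exp 1) \<le> ln (real p)" by (subst ln_le_cancel_iff) auto
      then show ?thesis by simp
    qed
    have lnt: "ln (real p) \<le> ln t" if "p \<in> Q" for p
      using Qprop[OF that] by simp
    have J1: "J \<ge> 1"
    proof -
      from False obtain p where "p \<in> Q" by auto
      then have "ln t \<ge> 1" using lnp lnt by force
      then show ?thesis unfolding J_def by linarith
    qed
    have mp: "1 \<le> m p" "m p \<le> J" "real (m p) \<le> ln (real p)" "ln (real p) < real (m p) + 1"
      if "p \<in> Q" for p
      using lnp[OF that] lnt[OF that] unfolding m_def J_def by linarith+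
    have wnn: "w p \<ge> 0" for p unfolding w_def by (cases "p = 0") auto
    have gnn: "g j \<ge> 0" for j unfolding g_def by simp
    have step1: "1 / real p \<le> w p / real J + (\<Sum>j\<in>{1..<J}. if m p \<le> j then w p * g j else 0)"
      if "p \<in> Q" for p
    proof -
      have pos: "real p > 0" using Qprop[OF that] by simp
      have lnz: "ln (real p) \<noteq> 0" using lnp[OF that] by simp
      have "1 / real p = w p / ln (real p)" unfolding w_def using lnz pos by (simp add: field_simps)
      also have "\<dots> \<le> w p / real (m p)"
        using mp[OF that] wnn[of p] by (intro divide_left_mono) auto
      also have "\<dots> = w p * (1 / real (m p))" by simp
      also have "1 / real (m p) = 1 / real J + (\<Sum>j\<in>{m p..<J}. g j)"
        unfolding g_def by (rule tele) (use mp[OF that] in auto)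
      also have "{m p..<J} = {j\<in>{1..<J}. m p \<le> j}" using mp[OF that] by auto
      also have "(\<Sum>j\<in>{j\<in>{1..<J}. m p \<le> j}. g j) = (\<Sum>j\<in>{1..<J}. if m p \<le> j then g j else 0)"
        by (rule sum.inter_filter) simp
      finally have X: "1 / real p \<le> w p * (1 / real J + (\<Sum>j\<in>{1..<J}. if m p \<le> j then g j else 0))" .
      have "(\<Sum>j\<in>{1..<J}. w p * (if m p \<le> j then g j else 0)) = (\<Sum>j\<in>{1..<J}. if m p \<le> j then w p * g j else 0)"
        by (rule sum.cong) auto
      then have "w p * (1 / real J + (\<Sum>j\<in>{1..<J}. if m p \<le> j then g j else 0))
          = w p / real J + (\<Sum>j\<in>{1..<J}. if m p \<le> j then w p * g j else 0)"
        by (simp only: distrib_left sum_distrib_left) simp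
      with X show ?thesis by simp
    qed
    have "(\<Sum>p\<in>Q. 1 / real p) \<le> (\<Sum>p\<in>Q. w p / real J + (\<Sum>j\<in>{1..<J}. if m p \<le> j then w p * g j else 0))"
      by (rule sum_mono) (rule step1)
    also have "\<dots> = (\<Sum>p\<in>Q. w p) / real J + (\<Sum>j\<in>{1..<J}. g j * (\<Sum>p\<in>{p\<in>Q. m p \<le> j}. w p))"
    proof -
      have "(\<Sum>p\<in>Q. \<Sum>j\<in>{1..<J}. if m p \<le> j then w p * g j else 0)
          = (\<Sum>j\<in>{1..<J}. \<Sum>p\<in>Q. if m p \<le> j then w p * g j else 0)" by (rule sum.swap)
      also have "\<dots> = (\<Sum>j\<in>{1..<J}. g j * (\<Sum>p\<in>{p\<in>Q. m p \<le> j}. w p))"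
        unfolding sum.inter_filter[OF fQ(1)] sum_distrib_left by (intro sum.cong refl) (simp add: mult.commute)
      finally show ?thesis by (simp add: sum.distrib sum_divide_distrib)
    qed
    also have "\<dots> \<le> (2 + 3) + (\<Sum>j\<in>{1..<J}. 1 / real j + 3 * g j)"
    proof (rule add_mono)
      have "(\<Sum>p\<in>Q. w p) \<le> (\<Sum>p\<in>Pt. w p)" using fPt wnn unfolding Q_def by (intro sum_mono2) auto
      also have "\<dots> \<le> ln t + ln 4" unfolding Pt_def w_def by (rule mertens1[OF t])
      also have "\<dots> \<le> real J + 1 + 3" unfolding J_def using ln4 t by linarith
      finally have "(\<Sum>p\<in>Q. w p) \<le> real J + 4" by simp
      then have "(\<Sum>p\<in>Q. w p) / real J \<le> (real J + 4) / real J"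
        using J1 by (intro divide_right_mono) auto
      also have "\<dots> = 1 + 4 / real J" using J1 by (simp add: field_simps)
      also have "\<dots> \<le> 1 + 4" using J1 by (simp add: field_simps)
      finally show "(\<Sum>p\<in>Q. w p) / real J \<le> 2 + 3" by simp
      show "(\<Sum>j\<in>{1..<J}. g j * (\<Sum>p\<in>{p\<in>Q. m p \<le> j}. w p)) \<le> (\<Sum>j\<in>{1..<J}. 1 / real j + 3 * g j)"
      proof (rule sum_mono)
        fix j assume j: "j \<in> {1..<J}"
        have "{p\<in>Q. m p \<le> j} \<subseteq> {p. prime p \<and> real p \<le> exp (real j + 1)}"
        proof safe
          fix p assume p: "p \<in> Q" "m p \<le> j"
          then show "prime p" using Qprop by auto
          have "ln (real p) < real j + 1" using mp(4)[OF p(1)] p(2) by linarith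
          then have "exp (ln (real p)) \<le> exp (real j + 1)" by simp
          moreover have "real p > 0" using Qprop[OF p(1)] by simp
          ultimately show "real p \<le> exp (real j + 1)" by simp
        qed
        then have "(\<Sum>p\<in>{p\<in>Q. m p \<le> j}. w p) \<le> (\<Sum>p\<in>{p. prime p \<and> real p \<le> exp (real j + 1)}. w p)"
          using wnn by (intro sum_mono2) (auto intro: finite_subset[of _ "{..nat \<lfloor>exp (real j + 1)\<rfloor>}"] simp: le_nat_iff le_floor_iff)
        also have "\<dots> \<le> ln (exp (real j + 1)) + ln 4" unfolding w_def by (rule mertens1) simp
        also have "\<dots> \<le> real j + 1 + 3" using ln4 by simp
        finally have "g j * (\<Sum>p\<in>{p\<in>Q. m p \<le> j}. w p) \<le> g j * (real j + 1 + 3)"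
          using gnn by (intro mult_left_mono) auto
        also have "\<dots> = 1 / real j + 3 * g j"
        proof -
          have jp: "real j > 0" using j by simp
          have "g j * (real j + 1) = 1 / real j" unfolding g_def using jp by (simp add: divide_simps)
          moreover have "g j * (real j + 1 + 3) = g j * (real j + 1) + 3 * g j" by (simp add: algebra_simps)
          ultimately show ?thesis by simp
        qed
        finally show "g j * (\<Sum>p\<in>{p\<in>Q. m p \<le> j}. w p) \<le> 1 / real j + 3 * g j" .
      qed
    qed
    also have "(\<Sum>j\<in>{1..<J}. 1 / real j + 3 * g j) = (\<Sum>j\<in>{1..<J}. 1 / real j) + 3 * (\<Sum>j\<in>{1..<J}. g j)"
      by (simp add: sum.distrib sum_distrib_left)
    also have "(\<Sum>j\<in>{1..<J}. g j) \<le> 1"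
    proof -
      have e: "1 = 1 / real J + (\<Sum>j\<in>{1..<J}. g j)" using tele[of 1 J] J1 unfolding g_def by simp
      have "1 / real J \<ge> 0" by simp
      with e show ?thesis by linarith
    qed
    also have "(\<Sum>j\<in>{1..<J}. 1 / real j) \<le> 1 + ln (real J)"
      using harm_le[OF J1] sum_mono2[of "{1..J}" "{1..<J}" "\<lambda>j. 1 / real j"] by force
    also have "ln (real J) \<le> ln (Log t)"
    proof -
      have "ln t \<ge> 0" using t by simp
      then have "real J \<le> ln t" unfolding J_def by linarith
      also have "\<dots> \<le> Log t" unfolding Log_def by simp
      finally show ?thesis using J1 by simp
    qed
    finally show ?thesis by simp
  qed
  have "(\<Sum>p\<in>Pt. 1 / real p) = (\<Sum>p\<in>R. 1 / real p) + (\<Sum>p\<in>Q. 1 / real p)"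
    unfolding split(1) by (rule sum.union_disjoint[OF fQ(2) fQ(1) split(2)])
  then show ?thesis unfolding Pt_def[symmetric] using sR sQ by linarith
qed


lemma dvd_div_iff_aux:
  fixes M d n :: nat
  assumes "M > 0" "d dvd M"
  shows "(n dvd M \<and> d dvd M div n) \<longleftrightarrow> n dvd M div d"
proof
  assume h: "n dvd M \<and> d dvd M div n"
  then obtain k where k: "M = n * k" by blast
  with h have "n > 0" "d dvd k" using assms by auto
  then obtain l where l: "k = d * l" by blast
  have "d > 0" using assms k l by auto
  then have "M div d = n * l" using k l by simp
  then show "n dvd M div d" by simp
next
  assume h: "n dvd M div d"
  then obtain l where l: "M div d = n * l" by blast
  have M: "M = d * n * l" using assms(2) l by (metis dvd_mult_div_cancel mult.assoc)
  then have "n > 0" using assms by (cases "n = 0") auto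
  then show "n dvd M \<and> d dvd M div n" using M by (simp add: mult.commute mult.left_commute)
qed

lemma inner_bound:
  fixes f :: "nat \<Rightarrow> real"
  assumes conv: "\<forall>n\<ge>1. one_conv f n \<le> real n" and M: "M > 0" and d: "d > 0"
  shows "(\<Sum>n\<in>{n. n dvd M \<and> d dvd M div n}. f n) \<le> real M / real d"
proof (cases "d dvd M")
  case True
  have eq: "{n. n dvd M \<and> d dvd M div n} = {n. n dvd M div d}"
    using dvd_div_iff_aux[OF M True] by blast
  obtain k where k: "M = d * k" using True by blast
  then have k1: "M div d = k" "k \<ge> 1" using M d by auto
  have "one_conv f (M div d) \<le> real (M div d)" using conv k1 by simp
  then have "(\<Sum>n\<in>{n. n dvd M \<and> d dvd M div n}. f n) \<le> real (M div d)"
    unfolding eq one_conv_def .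
  also have "\<dots> = real M / real d" using True by (simp add: real_of_nat_div)
  finally show ?thesis .
next
  case False
  have e: "{n. n dvd M \<and> d dvd M div n} = {}"
  proof safe
    fix n assume n: "n dvd M" "d dvd M div n"
    then obtain k where k: "M = n * k" by blast
    then have "n > 0" using M by (cases "n = 0") auto
    then have "M div n = k" using k by simp
    then have "d dvd M" using n(2) k by simp
    with False show "n \<in> {}" by simp
  qed
  show ?thesis unfolding e by simp
qed

lemma pow_sum_subsets:
  fixes a :: real
  assumes "finite A"
  shows "(1 + a) ^ card A = (\<Sum>S\<in>Pow A. a ^ card S)"
proof -
  have "(\<Prod>x\<in>A. a + 1) = (\<Sum>S\<in>Pow A. (\<Prod>x\<in>S. a) * (\<Prod>x\<in>A-S. 1))"
    by (rule prod_add[OF assms])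
  then show ?thesis by (simp add: add.commute)
qed



lemma main_comb:
  fixes f :: "nat \<Rightarrow> real" and a t :: real
  assumes nn: "\<forall>n\<ge>1. f n \<ge> 0" and conv: "\<forall>n\<ge>1. one_conv f n \<le> real n"
    and M: "M \<ge> 1" and a: "a \<ge> 0"
  shows "(\<Sum>n\<in>{n. n dvd M}. f n * (1 + a) ^ card {p. prime p \<and> real p \<le> t \<and> p dvd (M div n)})
         \<le> real M * (\<Prod>p\<in>{p. prime p \<and> real p \<le> t}. 1 + a / real p)"
proof -
  define Pt where "Pt = {p. prime p \<and> real p \<le> t}"
  define P where "P m = {p. prime p \<and> real p \<le> t \<and> p dvd m}" for m
  define D where "D = {n. n dvd M}"
  have M0: "M > 0" using M by simp
  have fD: "finite D" unfolding D_def using M0 by simp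
  have fPt: "finite Pt" unfolding Pt_def
    by (rule finite_subset[of _ "{..nat \<lfloor>t\<rfloor>}"]) (auto simp: le_nat_iff le_floor_iff)
  have PPt: "P m \<subseteq> Pt" for m unfolding P_def Pt_def by auto
  have fPowPt: "finite (Pow Pt)" using fPt by simp
  have key: "S \<subseteq> P m \<longleftrightarrow> \<Prod>S dvd m" if "S \<subseteq> Pt" for S m
  proof
    assume "S \<subseteq> P m"
    then show "\<Prod>S dvd m"
      using finite_subset[OF that fPt] unfolding P_def by (intro prod_primes_dvd) auto
  next
    assume h: "\<Prod>S dvd m"
    show "S \<subseteq> P m"
    proof
      fix p assume p: "p \<in> S"
      have "p dvd \<Prod>S" using p finite_subset[OF that fPt] by (intro dvd_prodI)
      then have "p dvd m" using h by (rule dvd_trans)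
      then show "p \<in> P m" using p that unfolding P_def Pt_def by auto
    qed
  qed
  have expand: "(1 + a) ^ card (P m) = (\<Sum>S\<in>Pow Pt. if \<Prod>S dvd m then a ^ card S else 0)" for m
  proof -
    have "(1 + a) ^ card (P m) = (\<Sum>S\<in>Pow (P m). a ^ card S)"
      by (rule pow_sum_subsets) (rule finite_subset[OF PPt fPt])
    also have "Pow (P m) = {S\<in>Pow Pt. \<Prod>S dvd m}" using key PPt by blast
    also have "(\<Sum>S\<in>{S\<in>Pow Pt. \<Prod>S dvd m}. a ^ card S) = (\<Sum>S\<in>Pow Pt. if \<Prod>S dvd m then a ^ card S else 0)"
      by (rule sum.inter_filter[OF fPowPt])
    finally show ?thesis .
  qed
  have "(\<Sum>n\<in>D. f n * (1 + a) ^ card (P (M div n)))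
      = (\<Sum>n\<in>D. \<Sum>S\<in>Pow Pt. if \<Prod>S dvd M div n then f n * a ^ card S else 0)"
    unfolding expand sum_distrib_left by (intro sum.cong refl) simp
  also have "\<dots> = (\<Sum>S\<in>Pow Pt. \<Sum>n\<in>D. if \<Prod>S dvd M div n then f n * a ^ card S else 0)"
    by (rule sum.swap)
  also have "\<dots> = (\<Sum>S\<in>Pow Pt. a ^ card S * (\<Sum>n\<in>{n. n dvd M \<and> \<Prod>S dvd M div n}. f n))"
  proof (rule sum.cong[OF refl])
    fix S
    have eqS: "{n. n dvd M \<and> \<Prod>S dvd M div n} = {n\<in>D. \<Prod>S dvd M div n}" unfolding D_def by auto
    show "(\<Sum>n\<in>D. if \<Prod>S dvd M div n then f n * a ^ card S else 0) =
          a ^ card S * (\<Sum>n\<in>{n. n dvd M \<and> \<Prod>S dvd M div n}. f n)"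
      unfolding eqS sum.inter_filter[OF fD] sum_distrib_left by (intro sum.cong refl) simp
  qed
  also have "\<dots> \<le> (\<Sum>S\<in>Pow Pt. a ^ card S * (real M / real (\<Prod>S)))"
  proof (rule sum_mono)
    fix S assume S: "S \<in> Pow Pt"
    have "\<Prod>S > 0" using S unfolding Pt_def by (auto intro!: prod_pos dest: prime_gt_0_nat)
    then show "a ^ card S * (\<Sum>n\<in>{n. n dvd M \<and> \<Prod>S dvd M div n}. f n) \<le> a ^ card S * (real M / real (\<Prod>S))"
      using a by (intro mult_left_mono inner_bound[OF conv M0]) auto
  qed
  also have "\<dots> = real M * (\<Sum>S\<in>Pow Pt. (\<Prod>p\<in>S. a / real p) * (\<Prod>p\<in>Pt - S. 1))"
    by (simp add: sum_distrib_left prod_dividef of_nat_prod mult.commute)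
  also have "(\<Sum>S\<in>Pow Pt. (\<Prod>p\<in>S. a / real p) * (\<Prod>p\<in>Pt - S. 1)) = (\<Prod>p\<in>Pt. a / real p + 1)"
    by (rule prod_add[OF fPt, symmetric])
  finally show ?thesis unfolding D_def P_def Pt_def by (simp add: add.commute)
qed



lemma prod_bound:
  assumes a: "a \<ge> 0" and t: "t \<ge> 1"
  shows "(\<Prod>p\<in>{p. prime p \<and> real p \<le> t}. 1 + a / real p) \<le> exp (10 * a) * Log t powr a"
proof -
  define Pt where "Pt = {p. prime p \<and> real p \<le> t}"
  have fPt: "finite Pt" unfolding Pt_def
    by (rule finite_subset[of _ "{..nat \<lfloor>t\<rfloor>}"]) (auto simp: le_nat_iff le_floor_iff)
  have "(\<Prod>p\<in>Pt. 1 + a / real p) \<le> (\<Prod>p\<in>Pt. exp (a / real p))"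
    by (rule prod_mono) (use a in \<open>auto simp: exp_ge_add_one_self add_nonneg_nonneg\<close>)
  also have "\<dots> = exp (a * (\<Sum>p\<in>Pt. 1 / real p))"
    using fPt by (simp add: exp_sum sum_distrib_left)
  also have "\<dots> \<le> exp (a * (ln (Log t) + 10))"
    using mertens2[OF t] a unfolding Pt_def by (simp add: mult_left_mono)
  also have "\<dots> = exp (10 * a) * exp (a * ln (Log t))" by (simp add: algebra_simps exp_add)
  also have "exp (a * ln (Log t)) = Log t powr a"
    unfolding powr_def Log_def by (simp add: mult.commute)
  finally show ?thesis unfolding Pt_def .
qed

theorem lemma4p2:
  fixes C :: real
  assumes "C > 0"
  shows "\<exists>A. \<forall>(f :: nat \<Rightarrow> real) (M :: nat) (t :: real) (K :: real).
           multiplicative f \<longrightarrow> (\<forall>n\<ge>1. f n \<ge> 0) \<longrightarrow>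
           (\<forall>n\<ge>1. one_conv f n \<le> real n) \<longrightarrow> M \<ge> 1 \<longrightarrow> t \<ge> 1 \<longrightarrow>
           (\<Sum>n\<in>{n. n dvd M \<and>
                    real (card {p. prime p \<and> real p \<le> t \<and> p dvd (M div n)}) \<ge> K}. f n)
             \<le> A * real M * exp (- C * K) * Log t powr (exp C - 1)"
proof (intro exI allI impI)
  fix f :: "nat \<Rightarrow> real" and M :: nat and t K :: real
  assume mult: "multiplicative f" and nn: "\<forall>n\<ge>1. f n \<ge> 0"
    and conv: "\<forall>n\<ge>1. one_conv f n \<le> real n" and M: "M \<ge> 1" and t: "t \<ge> 1"
  define a where "a = exp C - 1"
  have a: "a \<ge> 0" unfolding a_def using assms by simp
  define w where "w n = card {p. prime p \<and> real p \<le> t \<and> p dvd (M div n)}" for n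
  define D where "D = {n. n dvd M}"
  have fD: "finite D" unfolding D_def using M by simp
  have fnn: "f n \<ge> 0" if "n \<in> D" for n
  proof -
    have "n \<noteq> 0" using that M unfolding D_def by (cases "n = 0") auto
    then show ?thesis using nn by simp
  qed
  have "(\<Sum>n\<in>{n. n dvd M \<and> real (w n) \<ge> K}. f n)
      \<le> (\<Sum>n\<in>{n. n dvd M \<and> real (w n) \<ge> K}. f n * exp (C * (real (w n) - K)))"
  proof (rule sum_mono)
    fix n assume n: "n \<in> {n. n dvd M \<and> real (w n) \<ge> K}"
    then have "C * (real (w n) - K) \<ge> 0" using assms by simp
    then have "exp (C * (real (w n) - K)) \<ge> 1" by simp
    moreover have "f n \<ge> 0" using n fnn unfolding D_def by simp
    ultimately show "f n \<le> f n * exp (C * (real (w n) - K))"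
      using mult_left_mono[of 1 "exp (C * (real (w n) - K))" "f n"] by simp
  qed
  also have "\<dots> \<le> (\<Sum>n\<in>D. f n * exp (C * (real (w n) - K)))"
    using fD fnn unfolding D_def by (intro sum_mono2) auto
  also have "\<dots> = (\<Sum>n\<in>D. exp (- C * K) * (f n * (1 + a) ^ w n))"
  proof (rule sum.cong[OF refl])
    fix n
    have "C * (real (w n) - K) = - C * K + real (w n) * C" by (simp add: algebra_simps)
    then have "exp (C * (real (w n) - K)) = exp (- C * K) * exp C ^ w n"
      by (simp only: exp_add exp_of_nat_mult)
    moreover have "1 + a = exp C" unfolding a_def by simp
    ultimately show "f n * exp (C * (real (w n) - K)) = exp (- C * K) * (f n * (1 + a) ^ w n)"
      by simp
  qed
  also have "\<dots> = exp (- C * K) * (\<Sum>n\<in>D. f n * (1 + a) ^ w n)"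
    by (rule sum_distrib_left[symmetric])
  also have "(\<Sum>n\<in>D. f n * (1 + a) ^ w n) \<le> real M * (\<Prod>p\<in>{p. prime p \<and> real p \<le> t}. 1 + a / real p)"
    unfolding D_def w_def by (rule main_comb[OF nn conv M a])
  also have "\<dots> \<le> real M * (exp (10 * a) * Log t powr a)"
    using prod_bound[OF a t] by (intro mult_left_mono) auto
  finally have main: "(\<Sum>n\<in>{n. n dvd M \<and> real (w n) \<ge> K}. f n)
      \<le> exp (- C * K) * (real M * (exp (10 * a) * Log t powr a))"
    by (simp add: mult_left_mono)
  have eq: "exp (- C * K) * (real M * (exp (10 * a) * Log t powr a)) =
     exp (10 * (exp C - 1)) * real M * exp (- C * K) * Log t powr (exp C - 1)"
    unfolding a_def by (simp only: mult_ac)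
  show "(\<Sum>n\<in>{n. n dvd M \<and> real (card {p. prime p \<and> real p \<le> t \<and> p dvd (M div n)}) \<ge> K}. f n)
             \<le> exp (10 * (exp C - 1)) * real M * exp (- C * K) * Log t powr (exp C - 1)"
    using main unfolding eq w_def .
qed


end
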